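(* Let $X_1,X_2$ be independent real random variables with densities $f_{X_1},f_{X_2}$ that are symmetric about their means $\mu_1,\mu_2$ and positive on all of $\mathbb{R}$, and let $\Theta$ be a $[0,1]$-valued random variable with density $\pi$, independent of $(X_1,X_2)$. Let $\psi:[0,1]\to[n]$ be any preference disclosure policy and $M=\psi(\Theta)$. Suppose the platform uses a weighted-quadratic disclosure (WQD) policy $\gamma$ with weights $w_1,\dots,w_n\in[0,1]$, let $S=\gamma(M,X_1,X_2)$ and let the signal be $Y=(S,X_S)$. Then the equilibrium estimation policy $\eta^\star$ (the Bayes-consistent estimator $\eta^\star(y,m)=(\mathbf{E}[X_1\mid M=m,Y=y],\,\mathbf{E}[X_2\mid M=m,Y=y])$, wherever these conditional expectations are defined) is $$\eta^\star(y,m)=\begin{cases}(x_1,\mu_2), & \text{if } y=(1,x_1),\\ (\mu_1,x_2), & \text{if } y=(2,x_2).\end{cases}$$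
   Context: $[n]=\{1,\dots,n\}$ for a positive integer $n$. The receiver observes $\Theta=\theta$ and sends the message $m=\psi(\theta)\in[n]$. The platform observes $(m,x_1,x_2)$ and chooses $s=\gamma(m,x_1,x_2)\in\{1,2\}$; the receiver then observes $y=(1,x_1)$ if $s=1$ and $y=(2,x_2)$ if $s=2$. A WQD policy with weights $w_1,\dots,w_n\in[0,1]$ is the policy $\gamma(m,x_1,x_2)=1$ if $w_m(x_1-\mu_1)^2>(1-w_m)(x_2-\mu_2)^2$, and $\gamma(m,x_1,x_2)=2$ otherwise. *)

theory Defs
  imports "HOL-Probability.Probability"
begin

definition wqd :: "(nat \<Rightarrow> real) \<Rightarrow> real \<Rightarrow> real \<Rightarrow> nat \<Rightarrow> real \<Rightarrow> real \<Rightarrow> nat" where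
  "wqd w mu1 mu2 m x1 x2 =
     (if w m * (x1 - mu1)^2 > (1 - w m) * (x2 - mu2)^2 then 1 else 2)"

definition signal :: "nat \<Rightarrow> real \<Rightarrow> real \<Rightarrow> nat \<times> real" where
  "signal s x1 x2 = (s, if s = 1 then x1 else x2)"

definition eta_star :: "real \<Rightarrow> real \<Rightarrow> nat \<times> real \<Rightarrow> nat \<Rightarrow> real \<times> real" where
  "eta_star mu1 mu2 y m = (if fst y = 1 then (snd y, mu2) else (mu1, snd y))"

end

theory Submission
  imports Defs
begin

lemma sym_int0:
  fixes f g :: "real \<Rightarrow> real"
  assumes "distributed P lborel X (\<lambda>x. ennreal (f x))"
    and "\<And>x. f x \<ge> 0"
    and "\<And>t. f (mu + t) = f (mu - t)"
    and "g \<in> borel_measurable borel"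
    and "\<And>t. g (mu + t) = - g (mu - t)"
  shows "(\<integral>y. g y \<partial>distr P borel X) = 0"
proof -
  have d: "distr P borel X = density lborel (\<lambda>x. ennreal (f x))"
    using assms(1) unfolding distributed_def
    by (metis distr_cong sets_lborel)
  have fm: "f \<in> borel_measurable lborel"
  proof -
    have "(\<lambda>x. enn2real (ennreal (f x))) \<in> borel_measurable lborel"
      using assms(1) unfolding distributed_def by (intro borel_measurable_enn2real) simp
    moreover have "(\<lambda>x. enn2real (ennreal (f x))) = f" using assms(2) by auto
    ultimately show ?thesis by simp
  qed
  have gm: "g \<in> borel_measurable lborel" using assms(4) by simp
  have "(\<integral>y. g y \<partial>distr P borel X) = (\<integral>y. f y * g y \<partial>lborel)"
    unfolding d by (subst integral_density) (use fm gm assms(2) in auto)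
  also have "\<dots> = \<bar>-1\<bar> *\<^sub>R (\<integral>x. f (2*mu + (-1) * x) * g (2*mu + (-1) * x) \<partial>lborel)"
    by (rule lborel_integral_real_affine) simp
  also have "\<dots> = (\<integral>x. - (f x * g x) \<partial>lborel)"
  proof -
    have "f (2*mu + (-1) * x) * g (2*mu + (-1) * x) = - (f x * g x)" for x
      using assms(3)[of "mu - x"] assms(5)[of "mu - x"] by (simp add: algebra_simps)
    then show ?thesis by simp
  qed
  also have "\<dots> = - (\<integral>x. f x * g x \<partial>lborel)" by simp
  finally show ?thesis using \<open>(\<integral>y. g y \<partial>distr P borel X) = (\<integral>y. f y * g y \<partial>lborel)\<close> by linarith
qed

lemma key_indep:
  fixes P :: "'a measure" and Xs :: "'i \<Rightarrow> 'a \<Rightarrow> real" and phi :: "('i \<Rightarrow> real) \<Rightarrow> real"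
  assumes P: "prob_space P"
    and rv: "\<And>i. Xs i \<in> borel_measurable P"
    and I: "finite I" "j \<in> I"
    and ind: "prob_space.indep_vars P (\<lambda>i. borel) Xs I"
    and dist: "distributed P lborel (Xs j) (\<lambda>x. ennreal (f x))"
    and fpos: "\<And>x. f x \<ge> 0"
    and fsym: "\<And>t. f (mu + t) = f (mu - t)"
    and intj: "integrable P (Xs j)"
    and phim: "phi \<in> borel_measurable (PiM I (\<lambda>_. borel))"
    and bound: "\<And>z. \<bar>phi z\<bar> \<le> \<bar>z j - mu\<bar>"
    and odd: "\<And>x t. phi (x(j := mu + t)) = - phi (x(j := mu - t))"
  shows "(\<integral>\<omega>. phi (\<lambda>i\<in>I. Xs i \<omega>) \<partial>P) = 0"
proof -
  interpret prob_space P by (rule P)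
  define Mi where "Mi = (\<lambda>i. distr P borel (Xs i))"
  interpret ps: product_sigma_finite Mi
    unfolding product_sigma_finite_def Mi_def
    using prob_space_distr[OF rv] prob_space_imp_sigma_finite by blast
  let ?Z = "\<lambda>\<omega>. \<lambda>i\<in>I. Xs i \<omega>"
  have Zm: "?Z \<in> measurable P (PiM I (\<lambda>_. borel))"
    using rv by (intro measurable_restrict) auto
  have D: "distr P (PiM I (\<lambda>_. borel)) ?Z = PiM I Mi"
    unfolding Mi_def
    using indep_vars_iff_distr_eq_PiM'[where I=I and M'="\<lambda>_. borel" and X=Xs] I ind rv by auto
  have setsPi: "sets (PiM I Mi) = sets (PiM I (\<lambda>_. borel))"
    unfolding Mi_def by (rule sets_PiM_cong) auto
  have phim': "phi \<in> borel_measurable (PiM I Mi)"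
    using phim measurable_cong_sets[OF setsPi refl] by blast
  have intZ: "integrable P (\<lambda>\<omega>. phi (?Z \<omega>))"
  proof (rule Bochner_Integration.integrable_bound)
    show "integrable P (\<lambda>\<omega>. Xs j \<omega> - mu)" using intj by auto
    show "(\<lambda>\<omega>. phi (?Z \<omega>)) \<in> borel_measurable P"
      using measurable_comp[OF Zm phim] by (simp add: comp_def)
    show "AE \<omega> in P. norm (phi (?Z \<omega>)) \<le> norm (Xs j \<omega> - mu)"
    proof (rule AE_I2)
      fix \<omega> show "norm (phi (?Z \<omega>)) \<le> norm (Xs j \<omega> - mu)"
        using bound[of "?Z \<omega>"] I by simp
    qed
  qed
  have intPi: "integrable (PiM I Mi) phi"
    using intZ integrable_distr_eq[OF Zm phim] D by simp
  have "(\<integral>\<omega>. phi (?Z \<omega>) \<partial>P) = integral\<^sup>L (PiM I Mi) phi"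
    using integral_distr[OF Zm phim] D by simp
  also have "PiM I Mi = PiM (insert j (I - {j})) Mi"
    using I by (simp add: insert_absorb)
  also have "integral\<^sup>L (PiM (insert j (I - {j})) Mi) phi
      = (\<integral>x. (\<integral>y. phi (x(j:=y)) \<partial>Mi j) \<partial>PiM (I - {j}) Mi)"
    by (rule ps.product_integral_insert) (use I intPi in \<open>auto simp: insert_absorb\<close>)
  also have "\<dots> = (\<integral>x. 0 \<partial>PiM (I - {j}) Mi)"
  proof (rule Bochner_Integration.integral_cong[OF refl])
    fix x assume x: "x \<in> space (PiM (I - {j}) Mi)"
    have um: "(\<lambda>y. x(j := y)) \<in> measurable (Mi j) (PiM (insert j (I - {j})) Mi)"
      using measurable_component_update[OF x, of j] by simp
    have "(\<lambda>y. phi (x(j := y))) \<in> borel_measurable (Mi j)"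
      using measurable_comp[OF um] phim' I by (simp add: comp_def insert_absorb)
    then have gm: "(\<lambda>y. phi (x(j := y))) \<in> borel_measurable borel"
      unfolding Mi_def by simp
    show "(\<integral>y. phi (x(j:=y)) \<partial>Mi j) = 0"
      unfolding Mi_def
      by (rule sym_int0[OF dist fpos fsym gm odd])
  qed
  also have "\<dots> = 0" by simp
  finally show ?thesis .
qed

theorem proposition1:
  fixes P :: "'a measure"
    and X1 X2 Th :: "'a \<Rightarrow> real"
    and f1 f2 pi :: "real \<Rightarrow> real"
    and mu1 mu2 :: real
    and n :: nat
    and psi :: "real \<Rightarrow> nat"
    and w :: "nat \<Rightarrow> real"
  assumes "prob_space P"
    and "distributed P lborel X1 (\<lambda>x. ennreal (f1 x))"
    and "distributed P lborel X2 (\<lambda>x. ennreal (f2 x))"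
    and "\<And>x. f1 x > 0" and "\<And>x. f2 x > 0"
    and "\<And>t. f1 (mu1 + t) = f1 (mu1 - t)"
    and "\<And>t. f2 (mu2 + t) = f2 (mu2 - t)"
    and "integrable P X1" and "integrable P X2"
    and "prob_space.expectation P X1 = mu1"
    and "prob_space.expectation P X2 = mu2"
    and "distributed P lborel Th (\<lambda>x. ennreal (pi x))"
    and "\<And>\<omega>. \<omega> \<in> space P \<Longrightarrow> Th \<omega> \<in> {0..1}"
    and "prob_space.indep_vars P (\<lambda>i. borel)
           (\<lambda>i::nat. if i = 0 then X1 else if i = 1 then X2 else Th) {0, 1, 2}"
    and "psi \<in> borel \<rightarrow>\<^sub>M count_space UNIV"
    and "\<And>\<theta>. \<theta> \<in> {0..1} \<Longrightarrow> psi \<theta> \<in> {1..n}"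
    and "\<And>m. m \<in> {1..n} \<Longrightarrow> w m \<in> {0..1}"
  shows
    "let M = (\<lambda>\<omega>. psi (Th \<omega>));
         S = (\<lambda>\<omega>. wqd w mu1 mu2 (M \<omega>) (X1 \<omega>) (X2 \<omega>));
         Y = (\<lambda>\<omega>. signal (S \<omega>) (X1 \<omega>) (X2 \<omega>));
         F = vimage_algebra (space P) (\<lambda>\<omega>. (M \<omega>, Y \<omega>))
               (count_space UNIV \<Otimes>\<^sub>M (count_space UNIV \<Otimes>\<^sub>M borel))
     in AE \<omega> in P. (real_cond_exp P F X1 \<omega>, real_cond_exp P F X2 \<omega>)
                    = eta_star mu1 mu2 (Y \<omega>) (M \<omega>)"
proof -
  interpret prob_space P by (rule assms(1))
  note d1 = assms(2) and d2 = assms(3) and dT = assms(12)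
  have X1m[measurable]: "X1 \<in> borel_measurable P"
    using distributed_measurable[OF d1] by simp
  have X2m[measurable]: "X2 \<in> borel_measurable P"
    using distributed_measurable[OF d2] by simp
  have Thm[measurable]: "Th \<in> borel_measurable P"
    using distributed_measurable[OF dT] by simp
  have psim[measurable]: "psi \<in> borel \<rightarrow>\<^sub>M count_space UNIV" by (rule assms(15))
  define M where "M = (\<lambda>\<omega>. psi (Th \<omega>))"
  define S where "S = (\<lambda>\<omega>. wqd w mu1 mu2 (M \<omega>) (X1 \<omega>) (X2 \<omega>))"
  define Y where "Y = (\<lambda>\<omega>. signal (S \<omega>) (X1 \<omega>) (X2 \<omega>))"
  define N :: "(nat \<times> nat \<times> real) measure"
    where "N = (count_space UNIV \<Otimes>\<^sub>M (count_space UNIV \<Otimes>\<^sub>M borel))"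
  define G where "G = (\<lambda>\<omega>. (M \<omega>, Y \<omega>))"
  define F where "F = vimage_algebra (space P) G N"
  have wm[measurable]: "w \<in> count_space UNIV \<rightarrow>\<^sub>M borel" by simp
  have Mm[measurable]: "M \<in> P \<rightarrow>\<^sub>M count_space UNIV" unfolding M_def by measurable
  have Sm[measurable]: "S \<in> P \<rightarrow>\<^sub>M count_space UNIV" unfolding S_def wqd_def by measurable
  have Gm[measurable]: "G \<in> P \<rightarrow>\<^sub>M N" unfolding G_def Y_def signal_def N_def by measurable
  have GP: "G \<in> space P \<rightarrow> space N" using measurable_space[OF Gm] by blast
  have setsF: "sets F = {G -` A \<inter> space P | A. A \<in> sets N}"
    unfolding F_def by (rule sets_vimage_algebra2[OF GP])
  have subalg: "subalgebra P F"
    unfolding subalgebra_def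
  proof
    show "space F = space P" unfolding F_def by simp
    show "sets F \<subseteq> sets P" unfolding setsF using Gm by auto
  qed
  interpret fms: finite_measure_subalgebra P F
    by unfold_locales (rule subalg)
  define Xs where "Xs = (\<lambda>i::nat. if i = 0 then X1 else if i = 1 then X2 else Th)"
  have Xsm: "\<And>i. Xs i \<in> borel_measurable P" unfolding Xs_def by auto
  have ind: "indep_vars (\<lambda>i. borel) Xs {0, 1, 2}" using assms(14) unfolding Xs_def .
  have FG: "(\<lambda>\<omega>. h (G \<omega>)) \<in> borel_measurable F" if "h \<in> borel_measurable N" for h :: "_ \<Rightarrow> real"
  proof -
    have "G \<in> F \<rightarrow>\<^sub>M N" unfolding F_def by (rule measurable_vimage_algebra1[OF GP])
    then show ?thesis using measurable_comp[OF _ that] by (simp add: comp_def)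
  qed
  define g1 where "g1 = (\<lambda>\<omega>. if S \<omega> = 1 then X1 \<omega> else mu1)"
  define g2 where "g2 = (\<lambda>\<omega>. if S \<omega> = 1 then mu2 else X2 \<omega>)"
  have g1F: "g1 \<in> borel_measurable F"
  proof -
    have "(\<lambda>\<omega>. (\<lambda>p. if fst (snd p) = 1 then snd (snd p) else mu1) (G \<omega>)) \<in> borel_measurable F"
      by (rule FG) (unfold N_def, measurable)
    moreover have "(\<lambda>\<omega>. (\<lambda>p. if fst (snd p) = 1 then snd (snd p) else mu1) (G \<omega>)) = g1"
      unfolding g1_def G_def Y_def signal_def by auto
    ultimately show ?thesis by simp
  qed
  have g2F: "g2 \<in> borel_measurable F"
  proof -
    have "(\<lambda>\<omega>. (\<lambda>p. if fst (snd p) = 1 then mu2 else snd (snd p)) (G \<omega>)) \<in> borel_measurable F"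
      by (rule FG) (unfold N_def, measurable)
    moreover have "(\<lambda>\<omega>. (\<lambda>p. if fst (snd p) = 1 then mu2 else snd (snd p)) (G \<omega>)) = g2"
      unfolding g2_def G_def Y_def signal_def by (auto simp: wqd_def)
    ultimately show ?thesis by simp
  qed
  have g1m[measurable]: "g1 \<in> borel_measurable P" unfolding g1_def by measurable
  have g2m[measurable]: "g2 \<in> borel_measurable P" unfolding g2_def by measurable
  have int1: "integrable P X1" "integrable P X2" using assms(8,9) .
  have ig1: "integrable P g1"
  proof (rule Bochner_Integration.integrable_bound)
    show "integrable P (\<lambda>\<omega>. \<bar>X1 \<omega>\<bar> + \<bar>mu1\<bar>)" using int1 by auto
  qed (auto simp: g1_def)
  have ig2: "integrable P g2"
  proof (rule Bochner_Integration.integrable_bound)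
    show "integrable P (\<lambda>\<omega>. \<bar>X2 \<omega>\<bar> + \<bar>mu2\<bar>)" using int1 by auto
  qed (auto simp: g2_def)
  have c1: "AE \<omega> in P. real_cond_exp P F X1 \<omega> = g1 \<omega>"
  proof (rule fms.real_cond_exp_charact)
    fix A assume "A \<in> sets F"
    then obtain B where B[measurable]: "B \<in> sets N" and A: "A = G -` B \<inter> space P"
      using setsF by auto
    have Am[measurable]: "A \<in> sets P" unfolding A using Gm B by auto
    define phi where "phi = (\<lambda>z::nat\<Rightarrow>real. (if (psi (z 2), (2::nat, z 1)) \<in> B \<and>
       \<not> (w (psi (z 2)) * (z 0 - mu1)^2 > (1 - w (psi (z 2))) * (z 1 - mu2)^2) then 1 else 0)
       * (z 0 - mu1))"
    have phim: "phi \<in> borel_measurable (PiM {0,1,2} (\<lambda>_. borel))"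
      unfolding phi_def N_def using B unfolding N_def by measurable
    have z: "(\<integral>\<omega>. phi (\<lambda>i\<in>{0,1,2}. Xs i \<omega>) \<partial>P) = 0"
    proof (rule key_indep[where j=0 and f=f1 and mu=mu1, OF assms(1) Xsm _ _ ind])
      show "distributed P lborel (Xs 0) (\<lambda>x. ennreal (f1 x))" using d1 by (simp add: Xs_def)
      show "f1 x \<ge> 0" for x using assms(4)[of x] by simp
      show "f1 (mu1 + t) = f1 (mu1 - t)" for t by (rule assms(6))
      show "integrable P (Xs 0)" using int1 by (simp add: Xs_def)
      show "phi \<in> borel_measurable (PiM {0,1,2} (\<lambda>_. borel))" by (rule phim)
      show "\<bar>phi z\<bar> \<le> \<bar>z 0 - mu1\<bar>" for z by (simp add: phi_def abs_mult)
      show "phi (x(0 := mu1 + t)) = - phi (x(0 := mu1 - t))" for x t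
        by (simp add: phi_def power2_eq_square)
    qed auto
    have eq: "indicator A \<omega> * X1 \<omega> - indicator A \<omega> * g1 \<omega> = phi (\<lambda>i\<in>{0,1,2}. Xs i \<omega>)"
      if "\<omega> \<in> space P" for \<omega>
      using that unfolding A phi_def g1_def Xs_def G_def Y_def signal_def S_def M_def wqd_def
      by (auto simp: indicator_def)
    have "(\<integral>\<omega>. indicator A \<omega> * X1 \<omega> \<partial>P) - (\<integral>\<omega>. indicator A \<omega> * g1 \<omega> \<partial>P)
        = (\<integral>\<omega>. indicator A \<omega> * X1 \<omega> - indicator A \<omega> * g1 \<omega> \<partial>P)"
      by (rule Bochner_Integration.integral_diff[symmetric])
        (use integrable_mult_indicator[OF Am int1(1)] integrable_mult_indicator[OF Am ig1] in auto)
    also have "\<dots> = (\<integral>\<omega>. phi (\<lambda>i\<in>{0,1,2}. Xs i \<omega>) \<partial>P)"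
      by (rule Bochner_Integration.integral_cong[OF refl eq])
    finally show "(\<integral>\<omega>\<in>A. X1 \<omega> \<partial>P) = (\<integral>\<omega>\<in>A. g1 \<omega> \<partial>P)"
      using z unfolding set_lebesgue_integral_def by simp
  qed (use int1 ig1 g1F in auto)
  have c2: "AE \<omega> in P. real_cond_exp P F X2 \<omega> = g2 \<omega>"
  proof (rule fms.real_cond_exp_charact)
    fix A assume "A \<in> sets F"
    then obtain B where B[measurable]: "B \<in> sets N" and A: "A = G -` B \<inter> space P"
      using setsF by auto
    have Am[measurable]: "A \<in> sets P" unfolding A using Gm B by auto
    define phi where "phi = (\<lambda>z::nat\<Rightarrow>real. (if (psi (z 2), (1::nat, z 0)) \<in> B \<and>
       (w (psi (z 2)) * (z 0 - mu1)^2 > (1 - w (psi (z 2))) * (z 1 - mu2)^2) then 1 else 0)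
       * (z 1 - mu2))"
    have phim: "phi \<in> borel_measurable (PiM {0,1,2} (\<lambda>_. borel))"
      unfolding phi_def N_def using B unfolding N_def by measurable
    have z: "(\<integral>\<omega>. phi (\<lambda>i\<in>{0,1,2}. Xs i \<omega>) \<partial>P) = 0"
    proof (rule key_indep[where j=1 and f=f2 and mu=mu2, OF assms(1) Xsm _ _ ind])
      show "distributed P lborel (Xs 1) (\<lambda>x. ennreal (f2 x))" using d2 by (simp add: Xs_def)
      show "f2 x \<ge> 0" for x using assms(5)[of x] by simp
      show "f2 (mu2 + t) = f2 (mu2 - t)" for t by (rule assms(7))
      show "integrable P (Xs 1)" using int1 by (simp add: Xs_def)
      show "phi \<in> borel_measurable (PiM {0,1,2} (\<lambda>_. borel))" by (rule phim)
      show "\<bar>phi z\<bar> \<le> \<bar>z 1 - mu2\<bar>" for z by (simp add: phi_def abs_mult)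
      show "phi (x(1 := mu2 + t)) = - phi (x(1 := mu2 - t))" for x t
        by (simp add: phi_def power2_eq_square)
    qed auto
    have eq: "indicator A \<omega> * X2 \<omega> - indicator A \<omega> * g2 \<omega> = phi (\<lambda>i\<in>{0,1,2}. Xs i \<omega>)"
      if "\<omega> \<in> space P" for \<omega>
      using that unfolding A phi_def g2_def Xs_def G_def Y_def signal_def S_def M_def wqd_def
      by (auto simp: indicator_def)
    have "(\<integral>\<omega>. indicator A \<omega> * X2 \<omega> \<partial>P) - (\<integral>\<omega>. indicator A \<omega> * g2 \<omega> \<partial>P)
        = (\<integral>\<omega>. indicator A \<omega> * X2 \<omega> - indicator A \<omega> * g2 \<omega> \<partial>P)"
      by (rule Bochner_Integration.integral_diff[symmetric])
        (use integrable_mult_indicator[OF Am int1(2)] integrable_mult_indicator[OF Am ig2] in auto)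
    also have "\<dots> = (\<integral>\<omega>. phi (\<lambda>i\<in>{0,1,2}. Xs i \<omega>) \<partial>P)"
      by (rule Bochner_Integration.integral_cong[OF refl eq])
    finally show "(\<integral>\<omega>\<in>A. X2 \<omega> \<partial>P) = (\<integral>\<omega>\<in>A. g2 \<omega> \<partial>P)"
      using z unfolding set_lebesgue_integral_def by simp
  qed (use int1 ig2 g2F in auto)
  have "AE \<omega> in P. (real_cond_exp P F X1 \<omega>, real_cond_exp P F X2 \<omega>)
                    = eta_star mu1 mu2 (Y \<omega>) (M \<omega>)"
    using c1 c2 by eventually_elim (simp add: eta_star_def g1_def g2_def Y_def signal_def)
  then show ?thesis unfolding Let_def F_def G_def N_def Y_def S_def M_def .
qed

end
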